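(* For every $v\in\mathrm{Pl}_n$, the graph $G_v$ is the disjoint union of a complete multipartite graph and a set of isolated nodes; i.e., if $U\subseteq[n]$ is the set of non-isolated nodes of $G_v$, then the induced subgraph of $G_v$ on $U$ is a complete multipartite graph (equivalently, non-adjacency is an equivalence relation on $U$).
   Context: Coordinates of $\mathbb R^{\binom n2}$ are indexed by unordered pairs $\{i,j\}\subset[n]$, written $v_{ij}=v_{ji}$. $\mathrm{Pl}_n=\{v\in\mathbb R_{\ge0}^{\binom n2} : v_{ij}v_{kl}\le v_{ik}v_{jl}+v_{il}v_{jk}\ \text{for all pairwise distinct } i,j,k,l\in[n]\}$. For $v\in\mathrm{Pl}_n$, $G_v$ is the graph with vertex set $[n]$ in which $\{i,j\}$ is an edge iff $v_{ij}>0$. *)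

theory Defs
  imports Complex_Main "HOL-Library.Disjoint_Sets"
begin

text \<open>A vector in R^(n choose 2) is modelled as a function on unordered pairs,
  v :: nat set => real, where only the values v {i,j} for distinct i,j in {1..n}
  matter. Thus v_ij = v {i,j} = v {j,i} automatically.\<close>

definition Pl :: "nat \<Rightarrow> (nat set \<Rightarrow> real) set" where
  "Pl n = {v. (\<forall>i\<in>{1..n}. \<forall>j\<in>{1..n}. i \<noteq> j \<longrightarrow> 0 \<le> v {i, j}) \<and>
     (\<forall>i\<in>{1..n}. \<forall>j\<in>{1..n}. \<forall>k\<in>{1..n}. \<forall>l\<in>{1..n}.
        distinct [i, j, k, l] \<longrightarrow>
        v {i, j} * v {k, l} \<le> v {i, k} * v {j, l} + v {i, l} * v {j, k})}"

definition adj :: "nat \<Rightarrow> (nat set \<Rightarrow> real) \<Rightarrow> nat \<Rightarrow> nat \<Rightarrow> bool" where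
  "adj n v i j \<longleftrightarrow> i \<in> {1..n} \<and> j \<in> {1..n} \<and> i \<noteq> j \<and> v {i, j} > 0"

definition nonisolated :: "nat \<Rightarrow> (nat set \<Rightarrow> real) \<Rightarrow> nat set" where
  "nonisolated n v = {i \<in> {1..n}. \<exists>j. adj n v i j}"

definition complete_multipartite :: "('a \<Rightarrow> 'a \<Rightarrow> bool) \<Rightarrow> 'a set \<Rightarrow> bool" where
  "complete_multipartite E U \<longleftrightarrow>
     (\<exists>P. partition_on U P \<and>
        (\<forall>x\<in>U. \<forall>y\<in>U. x \<noteq> y \<longrightarrow> (E x y \<longleftrightarrow> \<not> (\<exists>B\<in>P. x \<in> B \<and> y \<in> B))))"

end

theory Submission
  imports Defs
begin

lemma adj_sym: "adj n v i j \<Longrightarrow> adj n v j i"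
  unfolding adj_def by (auto simp: insert_commute)

lemma key:
  assumes v: "v \<in> Pl n" and U: "x \<in> nonisolated n v" "y \<in> nonisolated n v" "z \<in> nonisolated n v"
    and d: "x \<noteq> z" and nxy: "x = y \<or> \<not> adj n v x y" and nyz: "y = z \<or> \<not> adj n v y z"
  shows "\<not> adj n v x z"
proof
  assume axz: "adj n v x z"
  show False
  proof (cases "x = y \<or> y = z")
    case True then show False using axz nxy nyz d by auto
  next
    case False
    with nxy nyz have nxy': "\<not> adj n v x y" and nyz': "\<not> adj n v y z" and ne: "x \<noteq> y" "y \<noteq> z" by auto
    from U(2) obtain w where ayw: "adj n v y w" unfolding nonisolated_def by auto
    have w1: "w \<noteq> x" using ayw nxy' adj_sym by blast
    have w2: "w \<noteq> z" using ayw nyz' by blast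
    have in1: "x \<in> {1..n}" "y \<in> {1..n}" "z \<in> {1..n}" "w \<in> {1..n}" "y \<noteq> w"
      using U ayw unfolding nonisolated_def adj_def by auto
    have dist: "distinct [x, z, y, w]" using d ne w1 w2 in1(5) by auto
    have ineq: "v {x, z} * v {y, w} \<le> v {x, y} * v {z, w} + v {x, w} * v {z, y}"
      using v in1 dist unfolding Pl_def by blast
    have nn: "\<And>i j. i \<in> {1..n} \<Longrightarrow> j \<in> {1..n} \<Longrightarrow> i \<noteq> j \<Longrightarrow> 0 \<le> v {i, j}"
      using v unfolding Pl_def by blast
    have "v {x, y} = 0" using nn[of x y] in1 ne nxy' unfolding adj_def by auto
    moreover have "v {z, y} = 0" using nn[of z y] in1 ne nyz' unfolding adj_def by (auto simp: insert_commute)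
    moreover have "v {x, z} > 0" "v {y, w} > 0" using axz ayw unfolding adj_def by auto
    ultimately show False using ineq by (simp add: mult_pos_pos) (smt (verit) mult_pos_pos)
  qed
qed

theorem mainTheorem12:
  fixes n :: nat and v :: "nat set \<Rightarrow> real"
  assumes "v \<in> Pl n"
  shows "complete_multipartite (adj n v) (nonisolated n v)"
proof -
  define U where "U = nonisolated n v"
  define R where "R = {(x, y). x \<in> U \<and> y \<in> U \<and> (x = y \<or> \<not> adj n v x y)}"
  have eq: "equiv U R"
  proof (rule equivI)
    show "R \<subseteq> U \<times> U" unfolding R_def by auto
    show "refl_on U R" unfolding refl_on_def R_def by auto
    show "sym R" unfolding sym_def R_def using adj_sym by blast
    show "trans R" unfolding trans_def R_def
      using key[OF assms] adj_sym unfolding U_def by blast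
  qed
  have "partition_on U (U // R)" by (rule partition_on_quotient[OF eq])
  moreover have "\<forall>x\<in>U. \<forall>y\<in>U. x \<noteq> y \<longrightarrow> (adj n v x y \<longleftrightarrow> \<not> (\<exists>B\<in>U // R. x \<in> B \<and> y \<in> B))"
  proof (intro ballI impI)
    fix x y assume xy: "x \<in> U" "y \<in> U" "x \<noteq> y"
    have "(\<exists>B\<in>U // R. x \<in> B \<and> y \<in> B) \<longleftrightarrow> (x, y) \<in> R"
    proof
      assume "\<exists>B\<in>U // R. x \<in> B \<and> y \<in> B"
      then obtain z where "z \<in> U" "(z, x) \<in> R" "(z, y) \<in> R" unfolding quotient_def by auto
      then show "(x, y) \<in> R" using eq unfolding equiv_def sym_def trans_def by blast
    next
      assume "(x, y) \<in> R"
      then show "\<exists>B\<in>U // R. x \<in> B \<and> y \<in> B"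
        using xy eq unfolding quotient_def equiv_def refl_on_def by blast
    qed
    then show "adj n v x y \<longleftrightarrow> \<not> (\<exists>B\<in>U // R. x \<in> B \<and> y \<in> B)"
      using xy unfolding R_def by auto
  qed
  ultimately show ?thesis unfolding complete_multipartite_def U_def by blast
qed

end
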